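(* Consider $\min_{x\in\mathbb{R}^n}\max_{y\in\mathbb{R}^m}f(x,y)$ with $f$ twice differentiable at $(\bar x,\bar y)$. (a) If $\nabla f(\bar x,\bar y)=0$, $\nabla^2_{yy}f(\bar x,\bar y)\prec0$, and for every $u\in\mathbb{R}^n\setminus\{0\}$ there exists $h\in\mathbb{R}^m$ with $\nabla^2f(\bar x,\bar y)((u,h),(u,h))>0$, then $(\bar x,\bar y)$ is a calm local minimax point. (b) If $(\bar x,\bar y)$ is a calm local minimax point, then $\nabla f(\bar x,\bar y)=0$, $\nabla^2_{yy}f(\bar x,\bar y)\preceq0$, and for every $u\in\mathbb{R}^n$ there exists $h\in\mathbb{R}^m$ with $\nabla^2f(\bar x,\bar y)((u,h),(u,h))\ge0$.
   Context: $f:\mathbb{R}^n\times\mathbb{R}^m\to\mathbb{R}$; $\nabla^2f(\bar x,\bar y)((u,h),(u,h))$ denotes the quadratic form of the full Hessian of $f$ at $(\bar x,\bar y)$ applied to $(u,h)$. Standing assumption: for every $x$, $\bar y$ and $\epsilon\ge0$ the maximum of $f(x,\cdot)$ over $\mathbb{B}_\epsilon(\bar y)$ is attained, where $\mathbb{B}_\epsilon(z)$ is the closed Euclidean ball. A radius function is $\tau:[0,\infty)\to[0,\infty)$ with $\tau(0)=0$, $\tau(\delta)\to0$ as $\delta\downarrow0$; calm at $0$ if $\tau(\delta)\le\kappa\delta$ on $[0,\delta_1]$ for some $\kappa,\delta_1>0$. $(\bar x,\bar y)$ is a calm local minimax point if there exist $\delta_0>0$ and a radius function $\tau$ calm at $0$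 with $f(\bar x,y)\le f(\bar x,\bar y)\le\max_{y'\in\mathbb{B}_{\tau(\delta)}(\bar y)}f(x,y')$ for all $\delta\in(0,\delta_0]$, $x\in\mathbb{B}_\delta(\bar x)$, $y\in\mathbb{B}_\delta(\bar y)$. $A\prec0$ ($\preceq0$) means negative definite (semidefinite). *)

theory Defs
  imports "HOL-Analysis.Analysis"
begin

text \<open>Then the gradient at z is g z and the Hessian quadratic form is v \<mapsto> H v \<bullet> v.\<close>
definition twice_diff_with ::
  "('c::euclidean_space \<Rightarrow> real) \<Rightarrow> 'c \<Rightarrow> ('c \<Rightarrow> 'c) \<Rightarrow> ('c \<Rightarrow> 'c) \<Rightarrow> bool" where
  "twice_diff_with f z g H \<longleftrightarrow>
     (\<exists>S. open S \<and> z \<in> S \<and> (\<forall>w\<in>S. (f has_derivative (\<lambda>v. g w \<bullet> v)) (at w)))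
     \<and> (g has_derivative H) (at z)"

definition hess_yy :: "('a::euclidean_space \<times> 'b::euclidean_space \<Rightarrow> 'a \<times> 'b) \<Rightarrow> 'b \<Rightarrow> 'b" where
  "hess_yy H = (\<lambda>h. snd (H (0, h)))"

definition neg_definite :: "('b::euclidean_space \<Rightarrow> 'b) \<Rightarrow> bool" where
  "neg_definite A \<longleftrightarrow> (\<forall>h. h \<noteq> 0 \<longrightarrow> A h \<bullet> h < 0)"

definition neg_semidefinite :: "('b::euclidean_space \<Rightarrow> 'b) \<Rightarrow> bool" where
  "neg_semidefinite A \<longleftrightarrow> (\<forall>h. A h \<bullet> h \<le> 0)"

definition radius_function :: "(real \<Rightarrow> real) \<Rightarrow> bool" where
  "radius_function \<tau> \<longleftrightarrow> \<tau> 0 = 0 \<and> (\<forall>\<delta>\<ge>0. \<tau> \<delta> \<ge> 0) \<and> (\<tau> \<longlongrightarrow> 0) (at_right 0)"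

definition calm_at_0 :: "(real \<Rightarrow> real) \<Rightarrow> bool" where
  "calm_at_0 \<tau> \<longleftrightarrow> (\<exists>\<kappa>>0. \<exists>\<delta>1>0. \<forall>\<delta>\<in>{0..\<delta>1}. \<tau> \<delta> \<le> \<kappa> * \<delta>)"

definition calm_local_minimax ::
  "('a::euclidean_space \<times> 'b::euclidean_space \<Rightarrow> real) \<Rightarrow> 'a \<Rightarrow> 'b \<Rightarrow> bool" where
  "calm_local_minimax f xb yb \<longleftrightarrow>
     (\<exists>\<delta>0>0. \<exists>\<tau>. radius_function \<tau> \<and> calm_at_0 \<tau> \<and>
        (\<forall>\<delta>\<in>{0<..\<delta>0}. \<forall>x\<in>cball xb \<delta>. \<forall>y\<in>cball yb \<delta>.
            f (xb, y) \<le> f (xb, yb) \<and>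
            f (xb, yb) \<le> (SUP y'\<in>cball yb (\<tau> \<delta>). f (x, y'))))"

end

theory Submission
  imports Defs
begin

lemma taylor2:
  fixes f :: "'c::euclidean_space \<Rightarrow> real"
  assumes S: "open S" "z \<in> S" and df: "\<forall>w\<in>S. (f has_derivative (\<lambda>v. g w \<bullet> v)) (at w)"
    and dg: "(g has_derivative H) (at z)" and e: "\<epsilon> > 0"
  shows "\<exists>r>0. \<forall>v. norm v < r \<longrightarrow> \<bar>f (z + v) - f z - g z \<bullet> v - (H v \<bullet> v) / 2\<bar> \<le> \<epsilon> * (norm v)^2"
proof -
  from dg have blH: "bounded_linear H" by (rule has_derivative_bounded_linear)
  interpret H: bounded_linear H by (fact blH)
  from dg e obtain d where d: "d > 0" "\<forall>y. norm (y - z) < d \<longrightarrow> norm (g y - g z - H (y - z)) \<le> \<epsilon> * norm (y - z)"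
    unfolding has_derivative_at_alt by blast
  from S obtain d0 where d0: "d0 > 0" "ball z d0 \<subseteq> S" using open_contains_ball by blast
  define r where "r = min d d0"
  have "r > 0" using d d0 by (simp add: r_def)
  moreover have "\<bar>f (z + v) - f z - g z \<bullet> v - (H v \<bullet> v) / 2\<bar> \<le> \<epsilon> * (norm v)^2" if v: "norm v < r" for v
  proof -
    define \<phi> where "\<phi> t = f (z + t *\<^sub>R v) - t * (g z \<bullet> v) - t^2 / 2 * (H v \<bullet> v)" for t
    define \<phi>' where "\<phi>' t = g (z + t *\<^sub>R v) \<bullet> v - g z \<bullet> v - t * (H v \<bullet> v)" for t
    have der: "(\<phi> has_real_derivative \<phi>' t) (at t)" if t: "0 \<le> t" "t \<le> 1" for t
    proof -
      have "norm (t *\<^sub>R v) < d0" using t v mult_left_le_one_le[of "norm v" t] by (auto simp: r_def)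
      hence inS: "z + t *\<^sub>R v \<in> S" using d0 by (auto simp: dist_norm)
      have d1: "((\<lambda>t. z + t *\<^sub>R v) has_derivative (\<lambda>s. s *\<^sub>R v)) (at t)"
        by (auto intro!: derivative_eq_intros)
      have d2: "((\<lambda>t. f (z + t *\<^sub>R v)) has_derivative (\<lambda>s. g (z + t *\<^sub>R v) \<bullet> (s *\<^sub>R v))) (at t)"
        using has_derivative_compose[OF d1] df inS by blast
      have d2': "((\<lambda>t. f (z + t *\<^sub>R v)) has_real_derivative g (z + t *\<^sub>R v) \<bullet> v) (at t)"
      proof -
        have "(\<lambda>s. g (z + t *\<^sub>R v) \<bullet> (s *\<^sub>R v)) = (*) (g (z + t *\<^sub>R v) \<bullet> v)"
          by (simp add: fun_eq_iff)
        thus ?thesis unfolding has_field_derivative_def using d2 by simp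
      qed
      show ?thesis unfolding \<phi>_def \<phi>'_def
        by (auto intro!: derivative_eq_intros d2')
    qed
    obtain \<xi> where xi: "\<xi> > 0" "\<xi> < 1" "\<phi> 1 - \<phi> 0 = (1 - 0) * \<phi>' \<xi>"
      using MVT2[of 0 1 \<phi> \<phi>'] der by auto
    have e1: "\<phi> 1 - \<phi> 0 = f (z + v) - f z - g z \<bullet> v - (H v \<bullet> v) / 2"
      by (simp add: \<phi>_def)
    have e2: "\<phi>' \<xi> = (g (z + \<xi> *\<^sub>R v) - g z - H ((z + \<xi> *\<^sub>R v) - z)) \<bullet> v"
      by (simp add: \<phi>'_def inner_diff_left H.scaleR)
    have e3: "norm ((z + \<xi> *\<^sub>R v) - z) = \<xi> * norm v" using xi by simp
    have "\<xi> * norm v \<le> norm v" using xi mult_left_le_one_le[of "norm v" \<xi>] by simp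
    hence e4: "\<xi> * norm v < d" using v by (simp add: r_def)
    have e5: "norm (g (z + \<xi> *\<^sub>R v) - g z - H ((z + \<xi> *\<^sub>R v) - z)) \<le> \<epsilon> * (\<xi> * norm v)"
      using d(2)[rule_format, of "z + \<xi> *\<^sub>R v"] e3 e4 by (simp only:)
    have "\<bar>\<phi>' \<xi>\<bar> \<le> norm (g (z + \<xi> *\<^sub>R v) - g z - H ((z + \<xi> *\<^sub>R v) - z)) * norm v"
      unfolding e2 by (rule Cauchy_Schwarz_ineq2)
    also have "\<dots> \<le> (\<epsilon> * (\<xi> * norm v)) * norm v" by (rule mult_right_mono[OF e5]) simp
    also have "\<dots> = \<xi> * (\<epsilon> * (norm v)^2)" by (simp add: power2_eq_square)
    also have "\<dots> \<le> \<epsilon> * (norm v)^2" 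
      using xi e by (intro mult_left_le_one_le) auto
    finally show ?thesis using e1 xi(3) by simp
  qed
  ultimately show ?thesis by blast
qed

lemma negdef_unif:
  fixes q :: "'b::euclidean_space \<Rightarrow> real"
  assumes cont: "continuous_on UNIV q" and hom: "\<And>t v. q (t *\<^sub>R v) = t^2 * q v"
    and neg: "\<And>v. v \<noteq> 0 \<Longrightarrow> q v < 0"
  shows "\<exists>c>0. \<forall>v. q v \<le> - c * (norm v)^2"
proof -
  obtain b :: 'b where b: "b \<in> Basis" using nonempty_Basis by blast
  have ne: "sphere (0::'b) 1 \<noteq> {}" using b norm_Basis[OF b] by auto
  obtain m where m: "m \<in> sphere 0 1" "\<forall>y\<in>sphere 0 1. q y \<le> q m"
    using continuous_attains_sup[OF compact_sphere ne continuous_on_subset[OF cont]] by blast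
  have "m \<noteq> 0" using m by auto
  hence qm: "q m < 0" by (rule neg)
  have "q v \<le> - (- q m) * (norm v)^2" for v
  proof (cases "v = 0")
    case True
    have "q v = q (0 *\<^sub>R v)" using True by simp
    also have "\<dots> = 0" by (simp only: hom) simp
    finally show ?thesis using True by simp
  next
    case False
    define w where "w = (1 / norm v) *\<^sub>R v"
    have "w \<in> sphere 0 1" using False by (simp add: w_def)
    hence "q w \<le> q m" using m by blast
    have "v = norm v *\<^sub>R w" using False by (simp add: w_def)
    hence "q v = (norm v)^2 * q w" using hom by metis
    also have "\<dots> \<le> (norm v)^2 * q m" using \<open>q w \<le> q m\<close> by (simp add: mult_left_mono)
    finally show ?thesis by (simp add: mult.commute)
  qed
  thus ?thesis using qm by (intro exI[of _ "- q m"]) auto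
qed

lemma pos_unif:
  fixes q :: "'a::euclidean_space \<Rightarrow> 'b::real_normed_vector \<Rightarrow> real"
  assumes cont: "\<And>h. continuous_on UNIV (\<lambda>u. q u h)"
    and hom: "\<And>t u h. q (t *\<^sub>R u) (t *\<^sub>R h) = t^2 * q u h"
    and pos: "\<And>u. u \<noteq> 0 \<Longrightarrow> \<exists>h. q u h > 0"
  shows "\<exists>c>0. \<exists>R>0. \<forall>u. \<exists>h. norm h \<le> R * norm u \<and> q u h \<ge> c * (norm u)^2"
proof -
  define hh where "hh u = (SOME h. q u h > 0)" for u
  have hh: "q u (hh u) > 0" if "u \<noteq> 0" for u
    using pos[OF that] unfolding hh_def by (rule someI_ex)
  define U where "U u = {v. q v (hh u) > q u (hh u) / 2}" for u
  have opn: "open (U u)" for u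
    unfolding U_def using open_Collect_less[OF continuous_on_const cont] by blast
  have cov: "sphere (0::'a) 1 \<subseteq> \<Union> (U ` sphere 0 1)"
  proof
    fix u :: 'a assume u: "u \<in> sphere 0 1"
    hence "u \<noteq> 0" by auto
    hence "u \<in> U u" using hh[of u] by (simp add: U_def)
    thus "u \<in> \<Union> (U ` sphere 0 1)" using u by blast
  qed
  obtain T where T: "T \<subseteq> sphere 0 1" "finite T" "sphere 0 1 \<subseteq> \<Union> (U ` T)"
    using compactE_image[OF compact_sphere opn cov] by blast
  define c where "c = Min (insert 1 ((\<lambda>u. q u (hh u) / 2) ` T))"
  define R where "R = Max (insert 1 ((\<lambda>u. norm (hh u)) ` T))"
  have "q u (hh u) > 0" if "u \<in> T" for u proof -
    have "u \<in> sphere 0 1" using that T(1) by blast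
    hence "u \<noteq> 0" by auto
    thus ?thesis by (rule hh)
  qed
  hence c0: "c > 0" unfolding c_def using T(2) by (simp add: Min_gr_iff)
  have "1 \<le> R" unfolding R_def using T(2) by (intro Max_ge) auto
  hence R0: "R > 0" by simp
  have cle: "c \<le> q u (hh u) / 2" if "u \<in> T" for u unfolding c_def using T(2) that by (intro Min_le) auto
  have Rge: "norm (hh u) \<le> R" if "u \<in> T" for u unfolding R_def using T(2) that by (intro Max_ge) auto
  have "\<exists>h. norm h \<le> R * norm u \<and> q u h \<ge> c * (norm u)^2" for u
  proof (cases "u = 0")
    case True
    have "q 0 0 = q (0 *\<^sub>R 0) (0 *\<^sub>R 0)" by simp
    also have "\<dots> = 0" by (simp only: hom) simp
    finally show ?thesis using True by (intro exI[of _ 0]) simp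
  next
    case False
    define w where "w = (1 / norm u) *\<^sub>R u"
    have "w \<in> sphere 0 1" using False by (simp add: w_def)
    then obtain s where s: "s \<in> T" "w \<in> U s" using T(3) by blast
    have qw: "q w (hh s) \<ge> c" using s cle[of s] by (simp add: U_def)
    have uw: "u = norm u *\<^sub>R w" using False by (simp add: w_def)
    have "q u (norm u *\<^sub>R hh s) = (norm u)^2 * q w (hh s)" using hom uw by metis
    also have "\<dots> \<ge> (norm u)^2 * c" using qw by (simp add: mult_left_mono)
    finally have 1: "q u (norm u *\<^sub>R hh s) \<ge> c * (norm u)^2" by (simp add: mult.commute)
    have "norm (norm u *\<^sub>R hh s) \<le> R * norm u" using Rge[OF s(1)] 
      by (simp add: mult.commute[of R] mult_left_mono)
    with 1 show ?thesis by blast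
  qed
  thus ?thesis using c0 R0 by blast
qed


lemma small_t:
  fixes a K r :: real
  assumes r: "r > 0" and h: "\<And>t. 0 < t \<Longrightarrow> t < r \<Longrightarrow> a \<le> t * K"
  shows "a \<le> 0"
proof (rule ccontr)
  assume a: "\<not> a \<le> 0"
  show False
  proof (cases "K \<le> 0")
    case True
    have "a \<le> (r/2) * K" using h[of "r/2"] r by simp
    also have "\<dots> \<le> 0" using True r by (simp add: mult_nonneg_nonpos)
    finally show False using a by simp
  next
    case False
    define t where "t = min (r/2) (a / (2*K))"
    have t0: "t > 0" using a False r by (simp add: t_def)
    have "a \<le> t * K" using h[of t] t0 r by (simp add: t_def)
    also have "\<dots> \<le> (a / (2*K)) * K" using False by (intro mult_right_mono) (auto simp: t_def)
    also have "\<dots> = a / 2" using False by simp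
    finally show False using a by simp
  qed
qed

lemma small_eps:
  fixes a K :: real
  assumes h: "\<And>e. 0 < e \<Longrightarrow> a \<le> e * K"
  shows "a \<le> 0"
proof (rule ccontr)
  assume a: "\<not> a \<le> 0"
  define e where "e = a / (2 * (\<bar>K\<bar> + 1))"
  have e0: "e > 0" using a by (simp add: e_def)
  have "a \<le> e * K" by (rule h[OF e0])
  also have "\<dots> \<le> e * (\<bar>K\<bar> + 1)" using e0 by (intro mult_left_mono) auto
  also have "\<dots> = a / 2" by (simp add: e_def field_simps)
  finally show False using a by simp
qed

lemma inner_0_left_pair: "p \<bullet> (0, h) = snd p \<bullet> h"
  by (simp add: inner_prod_def)

theorem mainTheorem15:
  fixes f :: "'a::euclidean_space \<times> 'b::euclidean_space \<Rightarrow> real"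
    and xb :: 'a and yb :: 'b
    and g H :: "'a \<times> 'b \<Rightarrow> 'a \<times> 'b"
  assumes attained: "\<And>x yc \<epsilon>. \<epsilon> \<ge> 0 \<Longrightarrow>
             \<exists>y\<in>cball yc \<epsilon>. \<forall>y'\<in>cball yc \<epsilon>. f (x, y') \<le> f (x, y)"
    and twice: "twice_diff_with f (xb, yb) g H"
  shows "(g (xb, yb) = 0 \<and> neg_definite (hess_yy H) \<and>
            (\<forall>u. u \<noteq> 0 \<longrightarrow> (\<exists>h. H (u, h) \<bullet> (u, h) > 0))
          \<longrightarrow> calm_local_minimax f xb yb)
       \<and> (calm_local_minimax f xb yb \<longrightarrow>
            g (xb, yb) = 0 \<and> neg_semidefinite (hess_yy H) \<and>
            (\<forall>u. \<exists>h. H (u, h) \<bullet> (u, h) \<ge> 0))"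
proof -
  let ?z = "(xb, yb)"
  from twice obtain S where S: "open S" "?z \<in> S" "\<forall>w\<in>S. (f has_derivative (\<lambda>v. g w \<bullet> v)) (at w)"
    and dg: "(g has_derivative H) (at ?z)" unfolding twice_diff_with_def by blast
  have blH: "bounded_linear H" using dg by (rule has_derivative_bounded_linear)
  interpret H: bounded_linear H by (fact blH)
  note tay = taylor2[OF S dg]
  define Q where "Q v = H v \<bullet> v" for v
  have Qhom: "Q (t *\<^sub>R v) = t^2 * Q v" for t v by (simp add: Q_def H.scaleR power2_eq_square)
  have Qcont: "continuous_on UNIV Q" unfolding Q_def
    by (intro continuous_intros linear_continuous_on[OF blH])
  obtain B where B: "\<And>v. \<bar>Q v\<bar> \<le> B * (norm v)^2"
  proof -
    obtain K where K: "\<forall>x. norm (H x) \<le> norm x * K" using H.pos_bounded by blast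
    have "\<bar>Q v\<bar> \<le> K * (norm v)^2" for v
    proof -
      have "\<bar>Q v\<bar> \<le> norm (H v) * norm v" unfolding Q_def by (rule Cauchy_Schwarz_ineq2)
      also have "\<dots> \<le> (norm v * K) * norm v" using K by (intro mult_right_mono) (auto simp del: split_paired_All)
      finally show ?thesis by (simp add: power2_eq_square mult_ac)
    qed
    thus ?thesis using that by blast
  qed
  have supf: "\<exists>y\<in>cball yb r. (SUP y'\<in>cball yb r. f (x, y')) = f (x, y) \<and> (\<forall>y'\<in>cball yb r. f (x, y') \<le> f (x, y))"
    if r0: "r \<ge> 0" for x r
  proof -
    obtain y where y: "y \<in> cball yb r" "\<forall>y'\<in>cball yb r. f (x, y') \<le> f (x, y)"
      using attained[OF r0] by blast
    have "(SUP y'\<in>cball yb r. f (x, y')) = f (x, y)"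
      using y by (intro cSup_eq_maximum) auto
    thus ?thesis using y by blast
  qed
  obtain gx gy where gxy: "g ?z = (gx, gy)" by (cases "g ?z")
  show ?thesis
  proof (rule conjI; rule impI)
    assume A: "g ?z = 0 \<and> neg_definite (hess_yy H) \<and> (\<forall>u. u \<noteq> 0 \<longrightarrow> (\<exists>h. H (u, h) \<bullet> (u, h) > 0))"
    have g0: "g ?z = 0" using A by blast
    obtain c1 where c1: "c1 > 0" "\<And>h. Q (0, h) \<le> - c1 * (norm h)^2"
    proof -
      have "\<exists>c>0. \<forall>h. (\<lambda>h. Q (0, h)) h \<le> - c * (norm h)^2"
      proof (rule negdef_unif)
        show "continuous_on UNIV (\<lambda>h::'b. Q (0, h))"
          by (rule continuous_on_compose2[OF Qcont]) (auto intro!: continuous_intros)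
        show "Q (0, t *\<^sub>R v) = t^2 * Q (0, v)" for t v
          using Qhom[of t "(0, v)"] by simp
        show "Q (0, v) < 0" if "v \<noteq> 0" for v
          using A that unfolding neg_definite_def hess_yy_def Q_def
          by (simp add: inner_0_left_pair)
      qed
      thus ?thesis using that by blast
    qed
    obtain c R where cR: "c > 0" "R > 0" "\<And>u. \<exists>h. norm h \<le> R * norm u \<and> Q (u, h) \<ge> c * (norm u)^2"
    proof -
      have "\<exists>c>0. \<exists>R>0. \<forall>u. \<exists>h. norm h \<le> R * norm u \<and> (\<lambda>u h. Q (u, h)) u h \<ge> c * (norm u)^2"
      proof (rule pos_unif)
        show "continuous_on UNIV (\<lambda>u::'a. Q (u, h))" for h
          by (rule continuous_on_compose2[OF Qcont]) (auto intro!: continuous_intros)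
        show "Q (t *\<^sub>R u, t *\<^sub>R h) = t^2 * Q (u, h)" for t u h
          using Qhom[of t "(u, h)"] by simp
        show "\<exists>h. Q (u, h) > 0" if "u \<noteq> 0" for u
          using A that unfolding Q_def by blast
      qed
      thus ?thesis using that by blast
    qed
    define \<epsilon> where "\<epsilon> = min (c1/2) (c / (2 * (1 + R^2)))"
    have "c / (2 * (1 + R^2)) > 0" using cR by (intro divide_pos_pos) (auto simp: add_pos_nonneg)
    hence e0: "\<epsilon> > 0" using c1 by (simp add: \<epsilon>_def)
    have eps1: "\<epsilon> \<le> c1/2" and eps2: "\<epsilon> \<le> c / (2 * (1 + R^2))" unfolding \<epsilon>_def by linarith+
    obtain r where r: "r > 0" "\<And>v. norm v < r \<Longrightarrow> \<bar>f (?z + v) - f ?z - g ?z \<bullet> v - Q v / 2\<bar> \<le> \<epsilon> * (norm v)^2"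
      using tay[OF e0] unfolding Q_def by blast
    define \<delta>0 where "\<delta>0 = r / (2 * (1 + R))"
    define \<tau> where "\<tau> \<delta> = R * \<delta>" for \<delta> :: real
    have d0: "\<delta>0 > 0" using r cR by (simp add: \<delta>0_def)
    show "calm_local_minimax f xb yb"
      unfolding calm_local_minimax_def
    proof (intro exI[of _ \<delta>0] exI[of _ \<tau>] conjI d0 ballI)
      show "radius_function \<tau>"
        unfolding radius_function_def \<tau>_def using cR
        by (auto intro!: tendsto_mult_right_zero tendsto_ident_at)
      show "calm_at_0 \<tau>"
        unfolding calm_at_0_def \<tau>_def using cR by (intro exI[of _ R] exI[of _ 1]) auto
      fix \<delta> x y assume d: "\<delta> \<in> {0<..\<delta>0}" and x: "x \<in> cball xb \<delta>" and y: "y \<in> cball yb \<delta>"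
      have dr: "(1 + R) * \<delta> < r"
      proof -
        have "(1 + R) * \<delta> \<le> (1 + R) * \<delta>0" using d cR by (intro mult_left_mono) auto
        also have "\<dots> = r / 2" using cR by (simp add: \<delta>0_def field_simps)
        finally show ?thesis using r by simp
      qed
      show "f (xb, y) \<le> f (xb, yb)"
      proof -
        define h where "h = y - yb"
        have nh: "norm h \<le> \<delta>" using y by (simp add: h_def dist_norm norm_minus_commute)
        have "norm (0::'a, h) < r" using nh dr cR d by (simp add: norm_Pair) (smt (verit) mult_le_cancel_right1)
        from r(2)[OF this] have T: "f (xb, y) - f ?z - Q (0, h) / 2 \<le> \<epsilon> * (norm h)^2"
          using g0 by (simp add: h_def norm_Pair)
        have "\<epsilon> * (norm h)^2 \<le> (c1/2) * (norm h)^2" by (intro mult_right_mono eps1) auto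
        thus ?thesis using T c1(2)[of h] by simp
      qed
      show "f (xb, yb) \<le> (SUP y'\<in>cball yb (\<tau> \<delta>). f (x, y'))"
      proof -
        define u where "u = x - xb"
        have nu: "norm u \<le> \<delta>" using x by (simp add: u_def dist_norm norm_minus_commute)
        obtain h where h: "norm h \<le> R * norm u" "Q (u, h) \<ge> c * (norm u)^2" using cR(3) by blast
        have td: "\<tau> \<delta> \<ge> 0" using cR d by (simp add: \<tau>_def)
        have hin: "yb + h \<in> cball yb (\<tau> \<delta>)"
        proof -
          have "R * norm u \<le> R * \<delta>" using nu cR by (intro mult_left_mono) auto
          thus ?thesis using h by (simp add: dist_norm \<tau>_def)
        qed
        have nv: "norm (u, h) \<le> (1 + R) * norm u"
          using norm_Pair_le[of u h] h by (simp add: algebra_simps)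
        have "(1 + R) * norm u \<le> (1 + R) * \<delta>" using nu cR by (intro mult_left_mono) auto
        hence "norm (u, h) < r" using nv dr by simp
        from r(2)[OF this] have T: "f (x, yb + h) - f ?z - Q (u, h) / 2 \<ge> - \<epsilon> * (norm (u, h))^2"
          using g0 by (simp add: u_def)
        have n2: "(norm (u, h))^2 \<le> (1 + R^2) * (norm u)^2"
        proof -
          have "(norm h)^2 \<le> (R * norm u)^2" using h by (intro power_mono) auto
          thus ?thesis by (simp add: norm_Pair algebra_simps power_mult_distrib)
        qed
        have "\<epsilon> * (norm (u, h))^2 \<le> (c / (2 * (1 + R^2))) * ((1 + R^2) * (norm u)^2)"
          by (rule mult_mono[OF eps2 n2]) (use e0 eps2 in \<open>linarith | simp\<close>)+
        also have "\<dots> = c / 2 * (norm u)^2"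
        proof -
          have "1 + R^2 \<noteq> 0" by (smt (verit) zero_le_power2)
          thus ?thesis by (simp add: field_simps)
        qed
        finally have "f ?z \<le> f (x, yb + h)" using T h(2) by simp
        moreover obtain ym where "ym \<in> cball yb (\<tau> \<delta>)" "(SUP y'\<in>cball yb (\<tau> \<delta>). f (x, y')) = f (x, ym)"
          "\<forall>y'\<in>cball yb (\<tau> \<delta>). f (x, y') \<le> f (x, ym)" using supf[OF td, of x] by blast
        ultimately show ?thesis using hin by force
      qed
    qed
  next
    assume CL: "calm_local_minimax f xb yb"
    then obtain \<delta>0 \<tau> where d0: "\<delta>0 > 0" and rad: "radius_function \<tau>" and cal: "calm_at_0 \<tau>"
      and P: "\<forall>\<delta>\<in>{0<..\<delta>0}. \<forall>x\<in>cball xb \<delta>. \<forall>y\<in>cball yb \<delta>. f (xb, y) \<le> f ?z \<and> f ?z \<le> (SUP y'\<in>cball yb (\<tau> \<delta>). f (x, y'))"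
      unfolding calm_local_minimax_def by blast
    from cal obtain \<kappa> \<delta>1 where k: "\<kappa> > 0" "\<delta>1 > 0" "\<forall>\<delta>\<in>{0..\<delta>1}. \<tau> \<delta> \<le> \<kappa> * \<delta>"
      unfolding calm_at_0_def by blast
    have LM: "f (xb, y) \<le> f ?z" if "norm (y - yb) \<le> \<delta>0" for y
      using P[rule_format, of \<delta>0 xb y] d0 that by (simp add: dist_norm norm_minus_commute)
    have MX: "\<exists>w. norm w \<le> \<kappa> * \<delta> \<and> f ?z \<le> f (x, yb + w)"
      if dd: "0 < \<delta>" "\<delta> \<le> \<delta>0" "\<delta> \<le> \<delta>1" "norm (x - xb) \<le> \<delta>" for \<delta> x
    proof -
      have td: "\<tau> \<delta> \<ge> 0" using rad dd unfolding radius_function_def by auto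
      from supf[OF td, of x] obtain ym where ym: "ym \<in> cball yb (\<tau> \<delta>)"
        "(SUP y'\<in>cball yb (\<tau> \<delta>). f (x, y')) = f (x, ym)" by blast
      have "f ?z \<le> f (x, ym)" using P[rule_format, of \<delta> x yb] dd ym
        by (simp add: dist_norm norm_minus_commute)
      moreover have "norm (ym - yb) \<le> \<kappa> * \<delta>"
      proof -
        have "norm (ym - yb) \<le> \<tau> \<delta>" using ym by (simp add: dist_norm norm_minus_commute)
        also have "\<dots> \<le> \<kappa> * \<delta>" using k(3) dd by auto
        finally show ?thesis .
      qed
      ultimately show ?thesis by (intro exI[of _ "ym - yb"]) simp
    qed
    have gzv: "g ?z \<bullet> (a, b) = gx \<bullet> a + gy \<bullet> b" for a b by (simp add: gxy)
    have KEY0: "\<exists>\<rho>>0. \<forall>t. 0 < t \<longrightarrow> t < \<rho> \<longrightarrow> t * (gy \<bullet> h) + t^2 * Q (0, h) / 2 - \<epsilon> * t^2 * (norm h)^2 \<le> 0"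
      if e: "\<epsilon> > 0" for h \<epsilon>
    proof -
      obtain r where r: "r > 0" "\<And>v. norm v < r \<Longrightarrow> \<bar>f (?z + v) - f ?z - g ?z \<bullet> v - Q v / 2\<bar> \<le> \<epsilon> * (norm v)^2"
        using tay[OF e] unfolding Q_def by blast
      define \<rho> where "\<rho> = min r \<delta>0 / (norm h + 1)"
      have nh1: "norm h + 1 > 0" by (smt (verit) norm_ge_zero)
      have "\<rho> > 0" using r d0 nh1 by (simp add: \<rho>_def)
      moreover have "t * (gy \<bullet> h) + t^2 * Q (0, h) / 2 - \<epsilon> * t^2 * (norm h)^2 \<le> 0"
        if t: "0 < t" "t < \<rho>" for t
      proof -
        have "t * norm h \<le> t * (norm h + 1)" using t by simp
        also have "\<dots> < \<rho> * (norm h + 1)" using t nh1 by simp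
        also have "\<dots> = min r \<delta>0" using nh1 by (simp add: \<rho>_def)
        finally have tn: "t * norm h < min r \<delta>0" .
        define v where "v = (0::'a, t *\<^sub>R h)"
        have nv: "norm v = t * norm h" using t by (simp add: v_def norm_Pair)
        have zv: "?z + v = (xb, yb + t *\<^sub>R h)" by (simp add: v_def)
        have "f (xb, yb + t *\<^sub>R h) \<le> f ?z" using LM[of "yb + t *\<^sub>R h"] tn t by simp
        moreover have "\<bar>f (?z + v) - f ?z - g ?z \<bullet> v - Q v / 2\<bar> \<le> \<epsilon> * (norm v)^2"
          using nv tn by (intro r(2)) simp
        moreover have "g ?z \<bullet> v = t * (gy \<bullet> h)" by (simp add: v_def gzv)
        moreover have "Q v = t^2 * Q (0, h)" using Qhom[of t "(0, h)"] by (simp add: v_def)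
        ultimately show ?thesis using zv nv by (simp add: power_mult_distrib algebra_simps)
      qed
      ultimately show ?thesis by blast
    qed
    have gy0: "gy = 0"
    proof -
      have "gy \<bullet> h \<le> 0" for h
      proof -
        obtain \<rho> where \<rho>: "\<rho> > 0" "\<forall>t. 0 < t \<longrightarrow> t < \<rho> \<longrightarrow> t * (gy \<bullet> h) + t^2 * Q (0, h) / 2 - 1 * t^2 * (norm h)^2 \<le> 0"
          using KEY0[of 1 h] by auto
        show ?thesis
        proof (rule small_t[OF \<rho>(1)])
          fix t assume t: "0 < t" "t < \<rho>"
          hence "t * (gy \<bullet> h - t * ((norm h)^2 - Q (0, h) / 2)) \<le> 0"
            using \<rho>(2)[rule_format, OF t] by (simp add: algebra_simps power2_eq_square)
          hence "gy \<bullet> h - t * ((norm h)^2 - Q (0, h) / 2) \<le> 0" using t by (simp add: mult_le_0_iff)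
          thus "gy \<bullet> h \<le> t * ((norm h)^2 - Q (0, h) / 2)" by simp
        qed
      qed
      from this[of gy] have "gy \<bullet> gy = 0" using inner_ge_zero[of gy] by linarith
      thus ?thesis by simp
    qed
    have NSD: "Q (0, h) \<le> 0" for h
    proof -
      have "Q (0, h) \<le> e * (2 * (norm h)^2)" if e: "e > 0" for e
      proof -
        obtain \<rho> where \<rho>: "\<rho> > 0" "\<forall>t. 0 < t \<longrightarrow> t < \<rho> \<longrightarrow> t * (gy \<bullet> h) + t^2 * Q (0, h) / 2 - e * t^2 * (norm h)^2 \<le> 0"
          using KEY0[OF e, of h] by auto
        define t where "t = \<rho> / 2"
        have t: "0 < t" "t < \<rho>" using \<rho> by (auto simp: t_def)
        have "t^2 * (Q (0, h) / 2 - e * (norm h)^2) \<le> 0"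
          using \<rho>(2)[rule_format, OF t] gy0 by (simp add: algebra_simps)
        hence "Q (0, h) / 2 - e * (norm h)^2 \<le> 0" using t by (simp add: mult_le_0_iff)
        thus ?thesis by simp
      qed
      thus ?thesis by (rule small_eps)
    qed
    have KEY: "\<exists>\<rho>>0. \<forall>t. 0 < t \<longrightarrow> t < \<rho> \<longrightarrow> (\<exists>w. norm w \<le> \<kappa> * (t * norm u) \<and>
        0 \<le> t * (gx \<bullet> u) + Q (t *\<^sub>R u, w) / 2 + \<epsilon> * (norm (t *\<^sub>R u, w))^2 \<and>
        norm (t *\<^sub>R u, w) \<le> (1 + \<kappa>) * (t * norm u))"
      if u: "u \<noteq> 0" and e: "\<epsilon> > 0" for u \<epsilon>
    proof -
      obtain r where r: "r > 0" "\<And>v. norm v < r \<Longrightarrow> \<bar>f (?z + v) - f ?z - g ?z \<bullet> v - Q v / 2\<bar> \<le> \<epsilon> * (norm v)^2"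
        using tay[OF e] unfolding Q_def by blast
      define m where "m = min (min \<delta>0 \<delta>1) (r / (2 * (1 + \<kappa>)))"
      have m0: "m > 0" using d0 k r by (simp add: m_def)
      have nu: "norm u > 0" using u by simp
      define \<rho> where "\<rho> = m / norm u"
      have "\<rho> > 0" using m0 nu by (simp add: \<rho>_def)
      moreover have "\<exists>w. norm w \<le> \<kappa> * (t * norm u) \<and>
        0 \<le> t * (gx \<bullet> u) + Q (t *\<^sub>R u, w) / 2 + \<epsilon> * (norm (t *\<^sub>R u, w))^2 \<and>
        norm (t *\<^sub>R u, w) \<le> (1 + \<kappa>) * (t * norm u)" if t: "0 < t" "t < \<rho>" for t
      proof -
        define \<delta> where "\<delta> = t * norm u"
        have dpos: "\<delta> > 0" using t nu by (simp add: \<delta>_def)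
        have "\<delta> < \<rho> * norm u" using t nu by (simp add: \<delta>_def)
        hence dm: "\<delta> < m" using nu by (simp add: \<rho>_def)
        hence dd: "\<delta> \<le> \<delta>0" "\<delta> \<le> \<delta>1" "\<delta> < r / (2 * (1 + \<kappa>))" by (auto simp: m_def)
        have "norm ((xb + t *\<^sub>R u) - xb) \<le> \<delta>" using t by (simp add: \<delta>_def)
        from MX[OF dpos dd(1,2) this] obtain w where w: "norm w \<le> \<kappa> * \<delta>" "f ?z \<le> f (xb + t *\<^sub>R u, yb + w)"
          by blast
        define v where "v = (t *\<^sub>R u, w)"
        have "norm v \<le> norm (t *\<^sub>R u) + norm w" unfolding v_def by (rule norm_Pair_le)
        also have "\<dots> \<le> \<delta> + \<kappa> * \<delta>" using w t by (simp add: \<delta>_def)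
        finally have nv: "norm v \<le> (1 + \<kappa>) * \<delta>" by (simp add: algebra_simps)
        have "(1 + \<kappa>) * \<delta> < (1 + \<kappa>) * (r / (2 * (1 + \<kappa>)))" using dd(3) k by (intro mult_strict_left_mono) auto
        also have "\<dots> = r / 2" using k by (simp add: field_simps)
        finally have "norm v < r" using nv r by simp
        from r(2)[OF this] have T: "f (?z + v) - f ?z - g ?z \<bullet> v - Q v / 2 \<le> \<epsilon> * (norm v)^2" by simp
        have zv: "?z + v = (xb + t *\<^sub>R u, yb + w)" by (simp add: v_def)
        have gv: "g ?z \<bullet> v = t * (gx \<bullet> u)" by (simp add: v_def gzv gy0)
        have "0 \<le> t * (gx \<bullet> u) + Q v / 2 + \<epsilon> * (norm v)^2" using T zv gv w(2) by simp
        thus ?thesis using w(1) nv unfolding v_def \<delta>_def by blast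
      qed
      ultimately show ?thesis by blast
    qed
    have GX: "gx \<bullet> u \<ge> 0" for u
    proof (cases "u = 0")
      case True thus ?thesis by simp
    next
      case False
      obtain \<rho> where \<rho>: "\<rho> > 0" "\<And>t. 0 < t \<Longrightarrow> t < \<rho> \<Longrightarrow> (\<exists>w. norm w \<le> \<kappa> * (t * norm u) \<and>
        0 \<le> t * (gx \<bullet> u) + Q (t *\<^sub>R u, w) / 2 + 1 * (norm (t *\<^sub>R u, w))^2 \<and>
        norm (t *\<^sub>R u, w) \<le> (1 + \<kappa>) * (t * norm u))"
        using KEY[OF False, of 1] by auto
      define K where "K = (\<bar>B\<bar> / 2 + 1) * ((1 + \<kappa>)^2 * (norm u)^2)"
      have "- (gx \<bullet> u) \<le> 0"
      proof (rule small_t[OF \<rho>(1)])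
        fix t assume t: "0 < t" "t < \<rho>"
        then obtain w where w: "0 \<le> t * (gx \<bullet> u) + Q (t *\<^sub>R u, w) / 2 + 1 * (norm (t *\<^sub>R u, w))^2"
          "norm (t *\<^sub>R u, w) \<le> (1 + \<kappa>) * (t * norm u)" using \<rho>(2) by blast
        define n where "n = norm (t *\<^sub>R u, w)"
        have Qb: "Q (t *\<^sub>R u, w) \<le> \<bar>B\<bar> * n^2"
          using B[of "(t *\<^sub>R u, w)"] by (smt (verit, best) mult_right_mono n_def zero_le_power2)
        have n2: "n^2 \<le> ((1 + \<kappa>) * (t * norm u))^2" using w(2) by (intro power_mono) (auto simp: n_def)
        have "(\<bar>B\<bar> / 2 + 1) * n^2 = (\<bar>B\<bar> * n^2) / 2 + n^2" by (simp add: algebra_simps)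
        hence "0 \<le> t * (gx \<bullet> u) + (\<bar>B\<bar> / 2 + 1) * n^2" using w(1) Qb unfolding n_def[symmetric] by linarith
        also have "\<dots> \<le> t * (gx \<bullet> u) + (\<bar>B\<bar> / 2 + 1) * ((1 + \<kappa>) * (t * norm u))^2"
          using n2 by (intro add_left_mono mult_left_mono) auto
        also have "\<dots> = t * (gx \<bullet> u + t * K)" by (simp add: K_def power_mult_distrib algebra_simps power2_eq_square)
        finally have "0 \<le> gx \<bullet> u + t * K" using t by (simp add: zero_le_mult_iff)
        thus "- (gx \<bullet> u) \<le> t * K" by simp
      qed
      thus ?thesis by simp
    qed
    have "gx \<bullet> gx = 0" using GX[of "- gx"] inner_ge_zero[of gx] by simp
    hence gx0: "gx = 0" by simp
    have g0: "g ?z = 0" using gxy gx0 gy0 by (simp add: zero_prod_def)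
    have PSD: "\<exists>h. Q (u, h) \<ge> 0" for u
    proof (cases "u = 0")
      case True
      thus ?thesis by (intro exI[of _ 0]) (simp add: Q_def zero_prod_def[symmetric] H.zero)
    next
      case False
      have cq: "continuous_on (cball 0 (\<kappa> * norm u)) (\<lambda>h::'b. Q (u, h))"
        by (rule continuous_on_compose2[OF Qcont]) (auto intro!: continuous_intros)
      have ne: "cball (0::'b) (\<kappa> * norm u) \<noteq> {}"
      proof -
        have "\<kappa> * norm u \<ge> 0" using k(1) by simp
        hence "(0::'b) \<in> cball 0 (\<kappa> * norm u)" by simp
        thus ?thesis by blast
      qed
      obtain hm where hm: "hm \<in> cball 0 (\<kappa> * norm u)" "\<forall>h\<in>cball 0 (\<kappa> * norm u). Q (u, h) \<le> Q (u, hm)"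
        using continuous_attains_sup[OF compact_cball ne cq] by blast
      have "- Q (u, hm) \<le> 0"
      proof (rule small_eps)
        fix e :: real assume e: "e > 0"
        obtain \<rho> where \<rho>: "\<rho> > 0" "\<And>t. 0 < t \<Longrightarrow> t < \<rho> \<Longrightarrow> (\<exists>w. norm w \<le> \<kappa> * (t * norm u) \<and>
          0 \<le> t * (gx \<bullet> u) + Q (t *\<^sub>R u, w) / 2 + e * (norm (t *\<^sub>R u, w))^2 \<and>
          norm (t *\<^sub>R u, w) \<le> (1 + \<kappa>) * (t * norm u))"
          using KEY[OF False e] by auto
        define t where "t = \<rho> / 2"
        have t: "0 < t" "t < \<rho>" using \<rho> by (auto simp: t_def)
        then obtain w where w: "norm w \<le> \<kappa> * (t * norm u)"
          "0 \<le> t * (gx \<bullet> u) + Q (t *\<^sub>R u, w) / 2 + e * (norm (t *\<^sub>R u, w))^2"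
          "norm (t *\<^sub>R u, w) \<le> (1 + \<kappa>) * (t * norm u)" using \<rho>(2) by blast
        define hh where "hh = (1 / t) *\<^sub>R w"
        have "norm hh = norm w / t" using t by (simp add: hh_def)
        also have "\<dots> \<le> \<kappa> * norm u" using w(1) t by (simp add: divide_le_eq mult_ac)
        finally have "hh \<in> cball 0 (\<kappa> * norm u)" by simp
        hence hle: "Q (u, hh) \<le> Q (u, hm)" using hm(2) by blast
        have "(t *\<^sub>R u, w) = t *\<^sub>R (u, hh)" using t by (simp add: hh_def)
        hence Qe: "Q (t *\<^sub>R u, w) = t^2 * Q (u, hh)" using Qhom[of t "(u, hh)"] by (simp only:)
        define n where "n = norm (t *\<^sub>R u, w)"
        have n2: "n^2 \<le> ((1 + \<kappa>) * (t * norm u))^2" using w(3) by (intro power_mono) (auto simp: n_def)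
        have "0 \<le> t^2 * Q (u, hh) / 2 + e * n^2" using w(2) Qe gx0 by (simp add: n_def)
        also have "\<dots> \<le> t^2 * Q (u, hh) / 2 + e * ((1 + \<kappa>) * (t * norm u))^2"
          using n2 e by (intro add_left_mono mult_left_mono) auto
        also have "\<dots> = t^2 * (Q (u, hh) / 2 + e * ((1 + \<kappa>)^2 * (norm u)^2))"
          by (simp add: power2_eq_square algebra_simps)
        finally have "0 \<le> Q (u, hh) / 2 + e * ((1 + \<kappa>)^2 * (norm u)^2)" using t by (simp add: zero_le_mult_iff)
        thus "- Q (u, hm) \<le> e * (2 * ((1 + \<kappa>)^2 * (norm u)^2))" using hle by simp
      qed
      thus ?thesis by (intro exI[of _ hm]) simp
    qed
    show "g ?z = 0 \<and> neg_semidefinite (hess_yy H) \<and> (\<forall>u. \<exists>h. H (u, h) \<bullet> (u, h) \<ge> 0)"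
      using g0 NSD PSD unfolding neg_semidefinite_def hess_yy_def Q_def
      by (simp add: inner_0_left_pair)
  qed
qed

end
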